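(* Let $A \in \mathbb{R}^{m \times n}$ and $b \in \mathbb{R}^m$ be such that $\mathcal{P} = \{x \in \mathbb{R}^n : Ax \geq b\}$ is a polytope. Let $G$ be a finite undirected graph whose vertices are pairs $u = (I, X)$ with $I \subset [m]$ and $X \in \mathbb{R}^{n \times (1+m)}$. Suppose that $G$ is nonempty and that for every vertex $u = (I,X)$ of $G$: (i) $\#I = n$; (ii) $A_I X = \tilde b_I$; (iii) $A X \geq_{\mathrm{lex}} \tilde b$; (iv) $u$ has exactly $n$ neighbors in $G$; (v) for every neighbor $u' = (I', X')$ of $u$ in $G$, $\#(I \cap I') = n-1$. Then the vertex-edge graph $G_\mathrm{vert}$ of $\mathcal{P}$ equals the image of $G$ by the map $\varphi : (I,X) \mapsto$ (first column of $X$).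
   Context: Let $\tilde b := [\,b \;\; -\mathrm{Id}_m\,] \in \mathbb{R}^{m \times (1+m)}$. For row vectors $\alpha,\beta \in \mathbb{R}^{1+m}$, $\alpha \leq_{\mathrm{lex}} \beta$ means $\alpha = \beta$ or $\alpha_k < \beta_k$ at the first index $k$ where they differ; for matrices with $1+m$ columns, $X \geq_{\mathrm{lex}} Y$ means $X_i \geq_{\mathrm{lex}} Y_i$ for every row $i$. For $I \subset [m]$, $A_I$, $\tilde b_I$ are the submatrices of rows indexed by $I$. A face of $\mathcal{P}$ is a nonempty set of minimizers over $\mathcal{P}$ of some linear function $x \mapsto \langle c, x\rangle$; vertices and edges are faces of dimension 0 and 1; two vertices $v,w$ are adjacent if the segment $[v,w]$ is an edge. $G_\mathrm{vert}$ is the graph on the vertices of $\mathcal{P}$ with this adjacency. The image of a graph $(V,E)$ by $f$ is the graph with vertex set $f(V)$ and edges $\{(f(v),f(w)) : (v,w) \in E,\ f(v) \neq f(w)\}$. *)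

theory Defs
  imports "HOL-Analysis.Analysis"
begin

text \<open>Polyhedron {x. A x \<ge> b}; rows of A are A 0, ..., A (m-1) (0-based indexing of [m]).\<close>
definition polyh :: "nat \<Rightarrow> (nat \<Rightarrow> real^'n) \<Rightarrow> (nat \<Rightarrow> real) \<Rightarrow> (real^'n) set" where
  "polyh m A b = {x. \<forall>i<m. A i \<bullet> x \<ge> b i}"

definition is_face :: "(real^'n) set \<Rightarrow> (real^'n) set \<Rightarrow> bool" where
  "is_face P F \<longleftrightarrow> F \<noteq> {} \<and> (\<exists>c. F = {x \<in> P. \<forall>y\<in>P. c \<bullet> x \<le> c \<bullet> y})"

definition poly_vertices :: "(real^'n) set \<Rightarrow> (real^'n) set" where
  "poly_vertices P = {v. \<exists>F. is_face P F \<and> aff_dim F = 0 \<and> F = {v}}"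

definition poly_adjacent :: "(real^'n) set \<Rightarrow> real^'n \<Rightarrow> real^'n \<Rightarrow> bool" where
  "poly_adjacent P v w \<longleftrightarrow> v \<in> poly_vertices P \<and> w \<in> poly_vertices P \<and>
     is_face P (closed_segment v w) \<and> aff_dim (closed_segment v w) = 1"

definition G_vert :: "(real^'n) set \<Rightarrow> (real^'n) set \<times> ((real^'n) \<times> (real^'n)) set" where
  "G_vert P = (poly_vertices P, {(v,w). poly_adjacent P v w})"

definition fin_undirected_graph :: "'v set \<Rightarrow> ('v \<times> 'v) set \<Rightarrow> bool" where
  "fin_undirected_graph V E \<longleftrightarrow> finite V \<and> E \<subseteq> V \<times> V \<and> sym E \<and> irrefl E"

definition graph_image :: "('v \<Rightarrow> 'w) \<Rightarrow> 'v set \<Rightarrow> ('v \<times> 'v) set \<Rightarrow> 'w set \<times> ('w \<times> 'w) set" where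
  "graph_image f V E = (f ` V, {(f v, f w) | v w. (v, w) \<in> E \<and> f v \<noteq> f w})"

definition lex_le :: "real list \<Rightarrow> real list \<Rightarrow> bool" where
  "lex_le \<alpha> \<beta> \<longleftrightarrow> length \<alpha> = length \<beta> \<and>
     (\<alpha> = \<beta> \<or> (\<exists>k < length \<alpha>. take k \<alpha> = take k \<beta> \<and> \<alpha> ! k < \<beta> ! k))"

text \<open>Row i of btilde = [b | -Id_m], of length 1+m.\<close>
definition btilde_row :: "nat \<Rightarrow> (nat \<Rightarrow> real) \<Rightarrow> nat \<Rightarrow> real list" where
  "btilde_row m b i = b i # map (\<lambda>j. if j = i then -1 else 0) [0..<m]"

text \<open>A matrix X in R^(n x (1+m)) is the list of its 1+m columns; row i of A X.\<close>
definition AX_row :: "(nat \<Rightarrow> real^'n) \<Rightarrow> (real^'n) list \<Rightarrow> nat \<Rightarrow> real list" where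
  "AX_row A X i = map (\<lambda>c. A i \<bullet> c) X"

end

theory Submission
  imports Defs
begin
definition lpos :: "nat \<Rightarrow> (nat \<Rightarrow> real) \<Rightarrow> bool" where
  "lpos N h \<longleftrightarrow> (\<exists>k<N. (\<forall>j<k. h j = 0) \<and> h k > 0)"
definition lnn :: "nat \<Rightarrow> (nat \<Rightarrow> real) \<Rightarrow> bool" where
  "lnn N h \<longleftrightarrow> (\<forall>j<N. h j = 0) \<or> lpos N h"

lemma lpos_ext: assumes "lpos N h" "\<And>j. j < N \<Longrightarrow> h j = g j" shows "lpos N g"
proof -
  obtain k where k: "k < N" "\<forall>j<k. h j = 0" "h k > 0" using assms(1) unfolding lpos_def by blast
  then show ?thesis unfolding lpos_def using assms(2) by (intro exI[of _ k]) auto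
qed

lemma lnn_ext: assumes "lnn N h" "\<And>j. j < N \<Longrightarrow> h j = g j" shows "lnn N g"
  using assms lpos_ext[of N h g] unfolding lnn_def by auto


lemma lpos_add: assumes "lpos N f" "lnn N g" shows "lpos N (\<lambda>j. f j + g j)"
proof -
  obtain k where k: "k < N" "\<forall>j<k. f j = 0" "f k > 0" using assms(1) unfolding lpos_def by blast
  show ?thesis
  proof (cases "\<forall>j<N. g j = 0")
    case True then show ?thesis unfolding lpos_def using k by (intro exI[of _ k]) auto
  next
    case False
    then obtain k' where k': "k' < N" "\<forall>j<k'. g j = 0" "g k' > 0" using assms(2) unfolding lnn_def lpos_def by blast
    show ?thesis unfolding lpos_def
    proof (cases "k \<le> k'")
      case True then show "\<exists>k<N. (\<forall>j<k. f j + g j = 0) \<and> f k + g k > 0"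
        using k k' by (intro exI[of _ k]) (auto, metis add_pos_nonneg le_less)
    next
      case False then show "\<exists>k<N. (\<forall>j<k. f j + g j = 0) \<and> f k + g k > 0"
        using k k' by (intro exI[of _ k']) auto
    qed
  qed
qed

lemma lnn_add: assumes "lnn N f" "lnn N g" shows "lnn N (\<lambda>j. f j + g j)"
proof (cases "\<forall>j<N. f j = 0")
  case True
  then show ?thesis using lnn_ext[OF assms(2), of "\<lambda>j. f j + g j"] by simp
next
  case False then have "lpos N f" using assms unfolding lnn_def by blast
  then show ?thesis using lpos_add assms unfolding lnn_def by blast
qed

lemma lpos_scale: assumes "a > 0" "lpos N h" shows "lpos N (\<lambda>j. a * h j)"
  using assms unfolding lpos_def by auto

lemma lnn_scale: assumes "a \<ge> 0" "lnn N h" shows "lnn N (\<lambda>j. a * h j)"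
  using assms lpos_scale[of a N h] unfolding lnn_def by (cases "a = 0") auto

lemma lpos_not_neg: assumes "lpos N h" shows "\<not> lnn N (\<lambda>j. - h j)"
proof
  assume a: "lnn N (\<lambda>j. - h j)"
  obtain k where k: "k < N" "\<forall>j<k. h j = 0" "h k > 0" using assms unfolding lpos_def by blast
  show False
  proof (cases "\<forall>j<N. - h j = 0")
    case True then show False using k by auto
  next
    case False
    then obtain k' where k': "k' < N" "\<forall>j<k'. - h j = 0" "- h k' > 0" using a unfolding lnn_def lpos_def by blast
    show False using k k' by (cases "k < k'") (auto, metis linorder_neqE_nat neg_0_less_iff_less not_less_iff_gr_or_eq)
  qed
qed

lemma lnn_total: "lnn N h \<or> lnn N (\<lambda>j. - h j)"
proof (cases "\<forall>j<N. h j = 0")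
  case True then show ?thesis unfolding lnn_def by auto
next
  case False
  define k where "k = (LEAST k. k < N \<and> h k \<noteq> 0)"
  have kk: "k < N \<and> h k \<noteq> 0" using False LeastI_ex[of "\<lambda>k. k < N \<and> h k \<noteq> 0"] unfolding k_def by blast
  have kj: "\<forall>j<k. h j = 0" using not_less_Least[of _ "\<lambda>k. k < N \<and> h k \<noteq> 0"] kk unfolding k_def
    by (meson order.strict_trans)
  show ?thesis
  proof (cases "h k > 0")
    case True then show ?thesis unfolding lnn_def lpos_def using kk kj by blast
  next
    case False then have "- h k > 0" using kk by auto
    then show ?thesis unfolding lnn_def lpos_def using kk kj by auto
  qed
qed

lemma lnn_antisym: assumes "lnn N h" "lnn N (\<lambda>j. - h j)" shows "\<forall>j<N. h j = 0"
  using assms lpos_not_neg unfolding lnn_def by blast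

lemma lpos_nn: "lpos N h \<Longrightarrow> lnn N h" unfolding lnn_def by blast

lemma lpos_mono: "lpos N h \<Longrightarrow> N \<le> N' \<Longrightarrow> lpos N' h"
  unfolding lpos_def by (meson less_le_trans)

lemma lpos_shift:
  assumes "\<forall>j<N1. h j = 0" "lpos N2 (\<lambda>j. h (N1 + j))" shows "lpos (N1 + N2) h"
proof -
  obtain k where k: "k < N2" "\<forall>j<k. h (N1 + j) = 0" "h (N1 + k) > 0" using assms(2) unfolding lpos_def by blast
  have "\<forall>j<N1 + k. h j = 0"
  proof (intro allI impI)
    fix j assume "j < N1 + k"
    then show "h j = 0" using assms(1) k(2) by (cases "j < N1") (auto, metis add_diff_inverse_nat less_diff_conv2 not_less add.commute)
  qed
  then show ?thesis unfolding lpos_def using k by (intro exI[of _ "N1 + k"]) auto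
qed

lemma lpos_0: "lpos N h \<Longrightarrow> h 0 \<ge> 0"
proof -
  assume "lpos N h"
  then obtain k where k: "k < N" "\<forall>j<k. h j = 0" "h k > 0" unfolding lpos_def by blast
  then show ?thesis by (cases k) auto
qed

lemma lnn_0: assumes "lnn N h" "0 < N" shows "h 0 \<ge> 0"
proof (cases "lpos N h")
  case True then show ?thesis using lpos_0 by blast
next
  case False then show ?thesis using assms unfolding lnn_def by auto
qed

lemma finite_lmin:
  fixes key :: "'a \<Rightarrow> nat \<Rightarrow> real"
  assumes "finite S" "S \<noteq> {}"
  shows "\<exists>x\<in>S. \<forall>y\<in>S. lnn N (\<lambda>j. key y j - key x j)"
  using assms
proof (induction S rule: finite_ne_induct)
  case (singleton x) then show ?case unfolding lnn_def by auto
next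
  case (insert a S)
  then obtain x where x: "x \<in> S" "\<forall>y\<in>S. lnn N (\<lambda>j. key y j - key x j)" by blast
  show ?case
  proof (cases "lnn N (\<lambda>j. key a j - key x j)")
    case True then show ?thesis using x by auto
  next
    case False
    then have xa: "lnn N (\<lambda>j. key x j - key a j)" using lnn_total[of N "\<lambda>j. key a j - key x j"] by simp
    have "\<forall>y\<in>insert a S. lnn N (\<lambda>j. key y j - key a j)"
    proof
      fix y assume "y \<in> insert a S"
      then show "lnn N (\<lambda>j. key y j - key a j)"
      proof
        assume "y = a" then show ?thesis unfolding lnn_def by auto
      next
        assume "y \<in> S"
        then have "lnn N (\<lambda>j. (key y j - key x j) + (key x j - key a j))" using lnn_add x xa by blast
        then show ?thesis by simp
      qed
    qed
    then show ?thesis by blast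
  qed
qed


locale LP =
  fixes m :: nat and A :: "nat \<Rightarrow> real^('n::finite)" and b :: "nat \<Rightarrow> real"
    and V :: "(nat set \<times> (real^'n) list) set" and E
  assumes graph: "fin_undirected_graph V E"
    and vert: "\<And>I X. (I, X) \<in> V \<Longrightarrow>
        I \<subseteq> {..<m} \<and> length X = Suc m \<and>
        card I = CARD('n) \<and>
        (\<forall>i\<in>I. AX_row A X i = btilde_row m b i) \<and>
        (\<forall>i<m. lex_le (btilde_row m b i) (AX_row A X i)) \<and>
        card {u'. ((I, X), u') \<in> E} = CARD('n) \<and>
        (\<forall>I' X'. ((I, X), (I', X')) \<in> E \<longrightarrow> card (I \<inter> I') = CARD('n) - 1)"
    and Vne: "V \<noteq> {}"
begin

abbreviation "P \<equiv> polyh m A b"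
abbreviation "bt i j \<equiv> btilde_row m b i ! j"

lemma bt0: "bt i 0 = b i" by (simp add: btilde_row_def)
lemma btS: "j < m \<Longrightarrow> bt i (Suc j) = (if j = i then -1 else 0)"
  by (simp add: btilde_row_def)
lemma bt_len: "length (btilde_row m b i) = Suc m" by (simp add: btilde_row_def)
lemma AX_nth: "j < length X \<Longrightarrow> AX_row A X i ! j = A i \<bullet> X ! j" by (simp add: AX_row_def)
lemma AX_len: "length (AX_row A X i) = length X" by (simp add: AX_row_def)

lemma Vfin: "finite V" using graph unfolding fin_undirected_graph_def by blast
lemma cardn_pos: "CARD('n) > 0" by simp

lemma VI: "(I, X) \<in> V \<Longrightarrow> I \<subseteq> {..<m}" using vert by blast
lemma VX: "(I, X) \<in> V \<Longrightarrow> length X = Suc m" using vert by blast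
lemma Vcard: "(I, X) \<in> V \<Longrightarrow> card I = CARD('n)" using vert by blast
lemma Vfinite: "(I, X) \<in> V \<Longrightarrow> finite I" using Vcard cardn_pos card_ge_0_finite by metis

lemma basis_eq: assumes "(I, X) \<in> V" "i \<in> I" "j < Suc m" shows "A i \<bullet> X ! j = bt i j"
proof -
  have "AX_row A X i = btilde_row m b i" using vert[OF assms(1)] assms(2) by blast
  then show ?thesis using AX_nth[of j X i] VX[OF assms(1)] assms(3) by simp
qed

lemma basis_col0: "(I, X) \<in> V \<Longrightarrow> i \<in> I \<Longrightarrow> A i \<bullet> X ! 0 = b i"
  using basis_eq[of I X i 0] bt0 by simp

lemma basis_colS: "(I, X) \<in> V \<Longrightarrow> i \<in> I \<Longrightarrow> j < m \<Longrightarrow> A i \<bullet> X ! Suc j = (if j = i then -1 else 0)"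
  using basis_eq[of I X i "Suc j"] btS by simp

lemma feas: assumes "(I, X) \<in> V" "i < m"
  shows "lnn (Suc m) (\<lambda>j. A i \<bullet> X ! j - bt i j)"
proof -
  have ll: "lex_le (btilde_row m b i) (AX_row A X i)" using vert[OF assms(1)] assms(2) by blast
  have lx: "length X = Suc m" using VX[OF assms(1)] .
  let ?a = "btilde_row m b i" and ?b = "AX_row A X i"
  have la: "length ?a = Suc m" "length ?b = Suc m" using bt_len AX_len lx by auto
  show ?thesis
  proof (cases "?a = ?b")
    case True
    then have "\<forall>j<Suc m. A i \<bullet> X ! j - bt i j = 0" using AX_nth lx by auto
    then show ?thesis unfolding lnn_def by blast
  next
    case False
    then obtain k where k: "k < Suc m" "take k ?a = take k ?b" "?a ! k < ?b ! k"
      using ll la unfolding lex_le_def by auto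
    have "\<forall>j<k. ?a ! j = ?b ! j" using k(2) by (metis nth_take)
    then have "\<forall>j<k. A i \<bullet> X ! j - bt i j = 0" using AX_nth lx k(1) by auto
    moreover have "A i \<bullet> X ! k - bt i k > 0" using k(3) AX_nth lx k(1) by auto
    ultimately show ?thesis unfolding lnn_def lpos_def using k(1) by blast
  qed
qed

lemma feas0: "(I, X) \<in> V \<Longrightarrow> i < m \<Longrightarrow> A i \<bullet> X ! 0 \<ge> b i"
  using lnn_0[OF feas, of I X i] bt0 by simp

lemma X0_in_P: "(I, X) \<in> V \<Longrightarrow> X ! 0 \<in> P"
  unfolding polyh_def using feas0 by blast

lemma spanI: assumes "(I, X) \<in> V" shows "span (A ` I) = UNIV"
proof -
  have fI: "finite I" using Vfinite[OF assms] .
  have Im: "I \<subseteq> {..<m}" using VI[OF assms] .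
  have inj: "inj_on A I"
  proof (rule inj_onI)
    fix k k' assume kk: "k \<in> I" "k' \<in> I" "A k = A k'"
    have "A k \<bullet> X ! Suc k = -1" using basis_colS[OF assms kk(1), of k] Im kk by auto
    moreover have "A k' \<bullet> X ! Suc k = (if k = k' then -1 else 0)" using basis_colS[OF assms kk(2), of k] Im kk by auto
    ultimately show "k = k'" using kk(3) by (auto split: if_splits)
  qed
  have cardA: "card (A ` I) = CARD('n)" using card_image[OF inj] Vcard[OF assms] by simp
  have indep: "independent (A ` I)"
  proof
    assume "dependent (A ` I)"
    then obtain u where u: "\<exists>v\<in>A ` I. u v \<noteq> 0" "(\<Sum>v\<in>A ` I. u v *\<^sub>R v) = 0"
      using real_vector.dependent_finite[of "A ` I"] fI by auto
    obtain i where i: "i \<in> I" "u (A i) \<noteq> 0" using u(1) by blast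
    have "(\<Sum>k\<in>I. u (A k) *\<^sub>R A k) = 0" using u(2) sum.reindex[OF inj, of "\<lambda>v. u v *\<^sub>R v"] by (simp add: comp_def)
    then have "(\<Sum>k\<in>I. u (A k) *\<^sub>R A k) \<bullet> X ! Suc i = 0" by simp
    moreover have "(\<Sum>k\<in>I. u (A k) *\<^sub>R A k) \<bullet> X ! Suc i = (\<Sum>k\<in>I. u (A k) * (if i = k then -1 else 0))"
      unfolding inner_sum_left
      using basis_colS[OF assms _, of _ i] Im i(1) by (intro sum.cong) auto
    moreover have "(\<Sum>k\<in>I. u (A k) * (if i = k then -1 else 0)) = - u (A i)"
      using fI i(1) by (simp add: if_distrib sum.delta cong: if_cong)
    ultimately show False using i(2) by simp
  qed
  have "UNIV \<subseteq> span (A ` I)"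
    using eucl.card_eq_dim[of "A ` I" UNIV] indep cardA fI by simp
  then show ?thesis by auto
qed

lemma spanrep: assumes "(I, X) \<in> V" shows "\<exists>lam. c = (\<Sum>k\<in>I. lam k *\<^sub>R A k)"
proof -
  have fI: "finite I" using Vfinite[OF assms] .
  have "c \<in> span (A ` I)" using spanI[OF assms] by simp
  then obtain u where u: "c = (\<Sum>v\<in>A ` I. u v *\<^sub>R v)"
    using real_vector.span_finite[of "A ` I"] fI by auto
  have Im: "I \<subseteq> {..<m}" using VI[OF assms] .
  have inj: "inj_on A I"
  proof (rule inj_onI)
    fix k k' assume kk: "k \<in> I" "k' \<in> I" "A k = A k'"
    have "A k \<bullet> X ! Suc k = -1" using basis_colS[OF assms kk(1), of k] Im kk by auto
    moreover have "A k' \<bullet> X ! Suc k = (if k = k' then -1 else 0)" using basis_colS[OF assms kk(2), of k] Im kk by auto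
    ultimately show "k = k'" using kk(3) by (auto split: if_splits)
  qed
  have "c = (\<Sum>k\<in>I. u (A k) *\<^sub>R A k)" using u sum.reindex[OF inj, of "\<lambda>v. u v *\<^sub>R v"] by (simp add: comp_def)
  then show ?thesis by (intro exI[of _ "\<lambda>k. u (A k)"])
qed

lemma uniq: assumes "(I, X) \<in> V" "\<forall>k\<in>I. A k \<bullet> y = 0" shows "y = 0"
proof -
  obtain lam where l: "y = (\<Sum>k\<in>I. lam k *\<^sub>R A k)" using spanrep[OF assms(1)] by blast
  have "y \<bullet> y = (\<Sum>k\<in>I. lam k * (A k \<bullet> y))"
    by (subst (1) l) (simp add: inner_sum_left)
  also have "\<dots> = 0" using assms(2) by simp
  finally show ?thesis by simp
qed

lemma notI_col: assumes "(I, X) \<in> V" "l < m" "l \<notin> I" shows "X ! Suc l = 0"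
proof (rule uniq[OF assms(1)], intro ballI)
  fix k assume "k \<in> I"
  then show "A k \<bullet> X ! Suc l = 0" using basis_colS[OF assms(1) _ assms(2)] assms(3) by auto
qed

lemma X_det_I: assumes "(I, X) \<in> V" "(I', X) \<in> V" shows "I = I'"
proof -
  have "I \<subseteq> I'" if h: "(I, X) \<in> V" "(I', X) \<in> V" for I I'
  proof
    fix i assume i: "i \<in> I"
    have im: "i < m" using VI[OF h(1)] i by auto
    show "i \<in> I'"
    proof (rule ccontr)
      assume "i \<notin> I'"
      then have "X ! Suc i = 0" using notI_col[OF h(2) im] by simp
      moreover have "A i \<bullet> X ! Suc i = -1" using basis_colS[OF h(1) i im] by simp
      ultimately show False by simp
    qed
  qed
  then show ?thesis using assms by blast
qed

lemma dir: assumes "(I, X) \<in> V" "k \<in> I" "\<forall>j\<in>I - {k}. A j \<bullet> y = 0"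
  shows "y = (A k \<bullet> y) *\<^sub>R (- X ! Suc k)"
proof -
  have Im: "I \<subseteq> {..<m}" using VI[OF assms(1)] .
  have Ad: "A j \<bullet> (- X ! Suc k) = (if j = k then 1 else 0)" if "j \<in> I" for j
    using basis_colS[OF assms(1) that, of k] Im assms(2) by auto
  have "y - (A k \<bullet> y) *\<^sub>R (- X ! Suc k) = 0"
  proof (rule uniq[OF assms(1)], intro ballI)
    fix j assume j: "j \<in> I"
    show "A j \<bullet> (y - (A k \<bullet> y) *\<^sub>R (- X ! Suc k)) = 0"
      using Ad[OF j] assms(3) j by (cases "j = k") (auto simp: inner_diff_right inner_add_right)
  qed
  then show ?thesis by (simp add: eq_neg_iff_add_eq_0)
qed

end

context LP begin

lemma pivot:
  assumes V1: "(I, X) \<in> V" and V2: "(I', X') \<in> V" and k: "k \<in> I" "k \<notin> I'"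
    and cI: "card (I \<inter> I') = CARD('n) - 1"
  shows "\<exists>l Th. l < m \<and> l \<notin> I \<and> l \<in> I' \<and> I \<inter> I' = I - {k} \<and> lpos (Suc m) Th \<and>
     (\<forall>j<Suc m. X' ! j = X ! j + Th j *\<^sub>R (- X ! Suc k)) \<and> A l \<bullet> (- X ! Suc k) < 0 \<and> Th 0 \<ge> 0"
proof -
  define d where "d = - X ! Suc k"
  have fI: "finite I" "finite I'" using Vfinite V1 V2 by auto
  have km: "k < m" using VI[OF V1] k by auto
  have sub: "I \<inter> I' \<subseteq> I - {k}" using k by auto
  have "card (I - {k}) = CARD('n) - 1" using Vcard[OF V1] k fI by simp
  then have IJ: "I \<inter> I' = I - {k}" using card_subset_eq[OF _ sub] fI cI by simp
  have "I' \<noteq> I \<inter> I'" using Vcard[OF V2] cI cardn_pos by (metis diff_less less_irrefl zero_less_one)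
  then obtain l where l: "l \<in> I'" "l \<notin> I" by blast
  have lm: "l < m" using VI[OF V2] l by auto
  define Th where "Th j = A k \<bullet> X' ! j - bt k j" for j
  have lenX: "length X = Suc m" "length X' = Suc m" using VX V1 V2 by auto
  have Xform: "X' ! j = X ! j + Th j *\<^sub>R d" if j: "j < Suc m" for j
  proof -
    have "\<forall>i\<in>I - {k}. A i \<bullet> (X' ! j - X ! j) = 0"
    proof
      fix i assume i: "i \<in> I - {k}"
      then have "i \<in> I'" using IJ by auto
      then show "A i \<bullet> (X' ! j - X ! j) = 0"
        using basis_eq[OF V1 _ j, of i] basis_eq[OF V2 _ j, of i] i by (simp add: inner_diff_right)
    qed
    then have "X' ! j - X ! j = (A k \<bullet> (X' ! j - X ! j)) *\<^sub>R d"
      using dir[OF V1 k(1)] unfolding d_def by blast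
    moreover have "A k \<bullet> (X' ! j - X ! j) = Th j"
      unfolding Th_def using basis_eq[OF V1 k(1) j] by (simp add: inner_diff_right)
    ultimately show ?thesis by (metis add.commute diff_add_cancel)
  qed
  have Thnn: "lnn (Suc m) Th" unfolding Th_def using feas[OF V2 km] .
  have Thpos: "lpos (Suc m) Th"
  proof (rule ccontr)
    assume "\<not> lpos (Suc m) Th"
    then have z: "\<forall>j<Suc m. Th j = 0" using Thnn unfolding lnn_def by blast
    have "X' = X" by (rule nth_equalityI) (use lenX Xform z in auto)
    then have "I = I'" using X_det_I[OF V1] V2 by simp
    then show False using k by simp
  qed
  have Xl: "A l \<bullet> X ! j + Th j * (A l \<bullet> d) = bt l j" if j: "j < Suc m" for j
    using basis_eq[OF V2 l(1) j] Xform[OF j] by (simp add: inner_add_right)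
  have Ald: "A l \<bullet> d < 0"
  proof (rule ccontr)
    assume "\<not> A l \<bullet> d < 0"
    then have "lnn (Suc m) (\<lambda>j. (A l \<bullet> d) * Th j)" using lnn_scale[OF _ Thnn] by simp
    then have neg: "lnn (Suc m) (\<lambda>j. - (A l \<bullet> X ! j - bt l j))"
      by (rule lnn_ext) (use Xl in \<open>auto simp: algebra_simps\<close>)
    have hnn: "lnn (Suc m) (\<lambda>j. A l \<bullet> X ! j - bt l j)" using feas[OF V1 lm] .
    have "A l \<bullet> X ! Suc l - bt l (Suc l) = 1" using notI_col[OF V1 lm l(2)] btS[OF lm] by simp
    then have "lpos (Suc m) (\<lambda>j. A l \<bullet> X ! j - bt l j)" using hnn lm unfolding lnn_def
      by (metis Suc_mono one_neq_zero)
    then show False using lpos_not_neg neg by blast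
  qed
  have "Th 0 \<ge> 0" using lpos_0[OF Thpos] .
  then show ?thesis using lm l IJ Thpos Xform Ald unfolding d_def by blast
qed

lemma nbr: assumes "((I, X), (I', X')) \<in> E"
  shows "(I, X) \<in> V" "(I', X') \<in> V" "card (I \<inter> I') = CARD('n) - 1" "\<exists>k. k \<in> I \<and> k \<notin> I'"
proof -
  show V1: "(I, X) \<in> V" and V2: "(I', X') \<in> V" using assms graph unfolding fin_undirected_graph_def by auto
  show c: "card (I \<inter> I') = CARD('n) - 1" using vert[OF V1] assms by blast
  show "\<exists>k. k \<in> I \<and> k \<notin> I'"
  proof (rule ccontr)
    assume "\<not> ?thesis"
    then have "I \<inter> I' = I" by blast
    then have "CARD('n) - 1 = CARD('n)" using c Vcard[OF V1] by simp
    moreover have "CARD('n) - 1 < CARD('n)" by (metis diff_less zero_less_one cardn_pos)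
    ultimately show False by linarith
  qed
qed

lemma theta_le:
  assumes V1: "(I, X) \<in> V" and V2: "(I1, X1) \<in> V" and V3: "(I2, X2) \<in> V"
    and l1: "l1 < m" "l1 \<in> I1" and a: "A l1 \<bullet> (- X ! Suc k) < 0"
    and X1: "\<forall>j<Suc m. X1 ! j = X ! j + T1 j *\<^sub>R (- X ! Suc k)"
    and X2: "\<forall>j<Suc m. X2 ! j = X ! j + T2 j *\<^sub>R (- X ! Suc k)"
  shows "lnn (Suc m) (\<lambda>j. T1 j - T2 j)"
proof -
  define a where "a = A l1 \<bullet> (- X ! Suc k)"
  have f: "lnn (Suc m) (\<lambda>j. A l1 \<bullet> X2 ! j - bt l1 j)" using feas[OF V3 l1(1)] .
  have e: "A l1 \<bullet> X1 ! j = bt l1 j" if "j < Suc m" for j using basis_eq[OF V2 l1(2) that] .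
  have "lnn (Suc m) (\<lambda>j. a * (T2 j - T1 j))"
  proof (rule lnn_ext[OF f])
    fix j assume j: "j < Suc m"
    have h1: "A l1 \<bullet> X1 ! j = A l1 \<bullet> X ! j + T1 j * a"
      unfolding X1[rule_format, OF j] a_def by (simp add: inner_add_right inner_diff_right)
    have h2: "A l1 \<bullet> X2 ! j = A l1 \<bullet> X ! j + T2 j * a"
      unfolding X2[rule_format, OF j] a_def by (simp add: inner_add_right inner_diff_right)
    show "A l1 \<bullet> X2 ! j - bt l1 j = a * (T2 j - T1 j)"
      using h1 h2 e[OF j] by (simp add: algebra_simps)
  qed
  moreover have pos: "- 1 / a \<ge> 0" using a unfolding a_def by simp
  ultimately have "lnn (Suc m) (\<lambda>j. (- 1 / a) * (a * (T2 j - T1 j)))" using lnn_scale by blast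
  moreover have "a \<noteq> 0" using a unfolding a_def by simp
  ultimately show ?thesis using lnn_ext[of "Suc m" "\<lambda>j. (- 1 / a) * (a * (T2 j - T1 j))" "\<lambda>j. T1 j - T2 j"]
    by (simp add: field_simps)
qed

lemma inj_k:
  assumes E1: "((I, X), (I1, X1)) \<in> E" and E2: "((I, X), (I2, X2)) \<in> E"
    and k: "k \<in> I" "k \<notin> I1" "k \<notin> I2"
  shows "(I1, X1) = (I2, X2)"
proof -
  note n1 = nbr[OF E1] and n2 = nbr[OF E2]
  obtain l1 T1 where p1: "l1 < m" "l1 \<in> I1" "A l1 \<bullet> (- X ! Suc k) < 0"
      "\<forall>j<Suc m. X1 ! j = X ! j + T1 j *\<^sub>R (- X ! Suc k)"
    using pivot[OF n1(1) n1(2) k(1) k(2) n1(3)] by blast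
  obtain l2 T2 where p2: "l2 < m" "l2 \<in> I2" "A l2 \<bullet> (- X ! Suc k) < 0"
      "\<forall>j<Suc m. X2 ! j = X ! j + T2 j *\<^sub>R (- X ! Suc k)"
    using pivot[OF n2(1) n2(2) k(1) k(3) n2(3)] by blast
  have a: "lnn (Suc m) (\<lambda>j. T1 j - T2 j)" using theta_le[OF n1(1) n1(2) n2(2) p1(1,2,3,4) p2(4)] .
  have b: "lnn (Suc m) (\<lambda>j. T2 j - T1 j)" using theta_le[OF n1(1) n2(2) n1(2) p2(1,2,3,4) p1(4)] .
  have "lnn (Suc m) (\<lambda>j. - (T1 j - T2 j))" by (rule lnn_ext[OF b]) simp
  then have z: "\<forall>j<Suc m. T1 j - T2 j = 0" using lnn_antisym a by blast
  have "X1 = X2" by (rule nth_equalityI) (use VX n1(2) n2(2) p1(4) p2(4) z in auto)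
  moreover then have "I1 = I2" using X_det_I n1(2) n2(2) by blast
  ultimately show ?thesis by simp
qed

lemma cnt: assumes V1: "(I, X) \<in> V" and k: "k \<in> I"
  shows "\<exists>I' X'. ((I, X), (I', X')) \<in> E \<and> k \<notin> I'"
proof -
  define N where "N = {u'. ((I, X), u') \<in> E}"
  have NV: "N \<subseteq> V" unfolding N_def using graph unfolding fin_undirected_graph_def by auto
  have fN: "finite N" using finite_subset[OF NV Vfin] .
  have cN: "card N = CARD('n)" unfolding N_def using vert[OF V1] by blast
  define g where "g u' = (SOME k. k \<in> I \<and> k \<notin> fst u')" for u' :: "nat set \<times> (real^'n) list"
  have g: "g u' \<in> I \<and> g u' \<notin> fst u'" if "u' \<in> N" for u'
  proof -
    obtain I' X' where u: "u' = (I', X')" by (cases u')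
    have "\<exists>k. k \<in> I \<and> k \<notin> I'" using nbr(4) that u unfolding N_def by blast
    then show ?thesis unfolding g_def u using someI_ex[of "\<lambda>k. k \<in> I \<and> k \<notin> I'"] by simp
  qed
  have inj: "inj_on g N"
  proof (rule inj_onI)
    fix u1 u2 assume u: "u1 \<in> N" "u2 \<in> N" "g u1 = g u2"
    obtain I1 X1 where u1: "u1 = (I1, X1)" by (cases u1)
    obtain I2 X2 where u2: "u2 = (I2, X2)" by (cases u2)
    have gg: "g u1 \<in> I" "g u1 \<notin> I1" "g u1 \<notin> I2" using g[OF u(1)] g[OF u(2)] u(3) u1 u2 by auto
    have e: "((I, X), (I1, X1)) \<in> E" "((I, X), (I2, X2)) \<in> E" using u u1 u2 unfolding N_def by auto
    show "u1 = u2" unfolding u1 u2 by (rule inj_k[OF e gg])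
  qed
  have "g ` N \<subseteq> I" using g by blast
  moreover have "card (g ` N) = card I" using card_image[OF inj] cN Vcard[OF V1] by simp
  ultimately have "g ` N = I" using card_subset_eq Vfinite[OF V1] by blast
  then obtain u' where u': "u' \<in> N" "g u' = k" using k by blast
  obtain I' X' where "u' = (I', X')" by (cases u')
  then show ?thesis using u' g[OF u'(1)] unfolding N_def by auto
qed

end

context LP begin

lemma inP: "x \<in> P \<longleftrightarrow> (\<forall>i<m. A i \<bullet> x \<ge> b i)" unfolding polyh_def by simp

lemma inner_rep: "c = (\<Sum>i\<in>I. lam i *\<^sub>R A i) \<Longrightarrow> c \<bullet> y = (\<Sum>i\<in>I. lam i * (A i \<bullet> y))"
  by (simp add: inner_sum_left)

lemma cd: assumes "(I, X) \<in> V" "k \<in> I" "c = (\<Sum>i\<in>I. lam i *\<^sub>R A i)"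
  shows "c \<bullet> (- X ! Suc k) = lam k"
proof -
  have Im: "I \<subseteq> {..<m}" using VI[OF assms(1)] .
  have "c \<bullet> (- X ! Suc k) = (\<Sum>i\<in>I. lam i * (if k = i then 1 else 0))"
    unfolding inner_rep[OF assms(3)]
    using basis_colS[OF assms(1) _, of _ k] Im assms(2) by (intro sum.cong) auto
  also have "\<dots> = lam k" using assms(2) Vfinite[OF assms(1)] by (simp add: if_distrib sum.delta cong: if_cong)
  finally show ?thesis .
qed

lemma cd': assumes "(I, X) \<in> V" "k \<in> I" "c = (\<Sum>i\<in>I. lam i *\<^sub>R A i)"
  shows "c \<bullet> X ! Suc k = - lam k"
  using cd[OF assms] by simp

lemma face_tight: assumes V1: "(I, X) \<in> V" and J: "J \<subseteq> I"
  shows "{x \<in> P. \<forall>y\<in>P. (\<Sum>j\<in>J. A j) \<bullet> x \<le> (\<Sum>j\<in>J. A j) \<bullet> y} = {x \<in> P. \<forall>j\<in>J. A j \<bullet> x = b j}"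
proof -
  have fJ: "finite J" using finite_subset[OF J Vfinite[OF V1]] .
  have Jm: "J \<subseteq> {..<m}" using J VI[OF V1] by auto
  have ge: "A j \<bullet> x \<ge> b j" if "x \<in> P" "j \<in> J" for x j using that Jm inP by auto
  have s: "(\<Sum>j\<in>J. A j) \<bullet> x = (\<Sum>j\<in>J. A j \<bullet> x)" for x by (simp add: inner_sum_left)
  have X0: "X ! 0 \<in> P" using X0_in_P[OF V1] .
  have sX: "(\<Sum>j\<in>J. A j) \<bullet> X ! 0 = (\<Sum>j\<in>J. b j)" unfolding s using basis_col0[OF V1] J by (intro sum.cong) auto
  show ?thesis
  proof (intro set_eqI iffI)
    fix x assume x: "x \<in> {x \<in> P. \<forall>y\<in>P. (\<Sum>j\<in>J. A j) \<bullet> x \<le> (\<Sum>j\<in>J. A j) \<bullet> y}"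
    then have xP: "x \<in> P" and le: "(\<Sum>j\<in>J. A j \<bullet> x) \<le> (\<Sum>j\<in>J. b j)" using X0 sX s by auto
    have "(\<Sum>j\<in>J. A j \<bullet> x - b j) \<le> 0" using le by (simp add: sum_subtractf)
    moreover have "(\<Sum>j\<in>J. A j \<bullet> x - b j) \<ge> 0" using ge[OF xP] by (intro sum_nonneg) auto
    ultimately have "(\<Sum>j\<in>J. A j \<bullet> x - b j) = 0" by simp
    then have "\<forall>j\<in>J. A j \<bullet> x - b j = 0" using sum_nonneg_eq_0_iff[OF fJ, of "\<lambda>j. A j \<bullet> x - b j"] ge[OF xP] by simp
    then show "x \<in> {x \<in> P. \<forall>j\<in>J. A j \<bullet> x = b j}" using xP by simp
  next
    fix x assume x: "x \<in> {x \<in> P. \<forall>j\<in>J. A j \<bullet> x = b j}"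
    have "(\<Sum>j\<in>J. A j) \<bullet> x \<le> (\<Sum>j\<in>J. A j) \<bullet> y" if y: "y \<in> P" for y
      unfolding s using x ge[OF y] by (intro sum_mono) auto
    then show "x \<in> {x \<in> P. \<forall>y\<in>P. (\<Sum>j\<in>J. A j) \<bullet> x \<le> (\<Sum>j\<in>J. A j) \<bullet> y}" using x by auto
  qed
qed

lemma vert_in: assumes V1: "(I, X) \<in> V" shows "X ! 0 \<in> poly_vertices P"
proof -
  have eq: "{x \<in> P. \<forall>j\<in>I. A j \<bullet> x = b j} = {X ! 0}"
  proof (intro set_eqI iffI)
    fix x assume x: "x \<in> {x \<in> P. \<forall>j\<in>I. A j \<bullet> x = b j}"
    have "x - X ! 0 = 0" using x basis_col0[OF V1] by (intro uniq[OF V1]) (auto simp: inner_diff_right)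
    then show "x \<in> {X ! 0}" by simp
  next
    fix x assume "x \<in> {X ! 0}"
    then show "x \<in> {x \<in> P. \<forall>j\<in>I. A j \<bullet> x = b j}" using X0_in_P[OF V1] basis_col0[OF V1] by auto
  qed
  have "is_face P {X ! 0}" unfolding is_face_def
    using face_tight[OF V1 order_refl] eq by (intro conjI exI[of _ "\<Sum>j\<in>I. A j"]) auto
  then show ?thesis unfolding poly_vertices_def by auto
qed

lemma vert_min: assumes "v \<in> poly_vertices P"
  obtains c where "{v} = {x \<in> P. \<forall>y\<in>P. c \<bullet> x \<le> c \<bullet> y}"
  using assms unfolding poly_vertices_def is_face_def by blast

lemma vert_of: assumes v: "v \<in> poly_vertices P" shows "\<exists>I X. (I, X) \<in> V \<and> X ! 0 = v"
proof -
  obtain c where c: "{v} = {x \<in> P. \<forall>y\<in>P. c \<bullet> x \<le> c \<bullet> y}" using vert_min[OF v] by blast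
  define key where "key u j = c \<bullet> (snd u ! j)" for u :: "nat set \<times> (real^'n) list" and j
  obtain u where u: "u \<in> V" "\<forall>y\<in>V. lnn (Suc m) (\<lambda>j. key y j - key u j)"
    using finite_lmin[OF Vfin Vne, of "Suc m" key] by blast
  obtain I X where uIX: "u = (I, X)" by (cases u)
  have V1: "(I, X) \<in> V" using u uIX by simp
  obtain lam where lam: "c = (\<Sum>k\<in>I. lam k *\<^sub>R A k)" using spanrep[OF V1] by blast
  show ?thesis
  proof (cases "\<forall>k\<in>I. lam k \<ge> 0")
    case True
    have "c \<bullet> X ! 0 \<le> c \<bullet> y" if y: "y \<in> P" for y
    proof -
      have "c \<bullet> X ! 0 = (\<Sum>k\<in>I. lam k * b k)" unfolding inner_rep[OF lam]
        using basis_col0[OF V1] by simp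
      also have "\<dots> \<le> (\<Sum>k\<in>I. lam k * (A k \<bullet> y))"
        using True y VI[OF V1] inP by (intro sum_mono mult_left_mono) auto
      also have "\<dots> = c \<bullet> y" unfolding inner_rep[OF lam] ..
      finally show ?thesis .
    qed
    then have "X ! 0 \<in> {v}" using c X0_in_P[OF V1] by blast
    then show ?thesis using V1 by auto
  next
    case False
    then obtain k where k: "k \<in> I" "lam k < 0" by auto
    obtain I' X' where e: "((I, X), (I', X')) \<in> E" "k \<notin> I'" using cnt[OF V1 k(1)] by blast
    note nb = nbr[OF e(1)]
    obtain l Th where p: "lpos (Suc m) Th" "\<forall>j<Suc m. X' ! j = X ! j + Th j *\<^sub>R (- X ! Suc k)"
      using pivot[OF nb(1) nb(2) k(1) e(2) nb(3)] by blast
    have "lnn (Suc m) (\<lambda>j. key (I', X') j - key u j)" using u(2) nb(2) by blast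
    moreover have "lpos (Suc m) (\<lambda>j. - (key (I', X') j - key u j))"
    proof (rule lpos_ext[OF lpos_scale[OF _ p(1), of "- lam k"]])
      show "0 < - lam k" using k by simp
      fix j assume j: "j < Suc m"
      have ck: "c \<bullet> X ! Suc k = - lam k" using cd[OF V1 k(1) lam] by simp
      show "- lam k * Th j = - (key (I', X') j - key u j)"
        unfolding key_def uIX using p(2) j ck by (simp add: inner_add_right inner_diff_right)
    qed
    ultimately show ?thesis using lpos_not_neg[of "Suc m" "\<lambda>j. - (key (I', X') j - key u j)"] by simp
  qed
qed

lemma VS: assumes x: "x \<in> poly_vertices P" and vw: "v \<in> P" "w \<in> P" and s: "x \<in> closed_segment v w"
  shows "x = v \<or> x = w"
proof -
  obtain c where c: "{x} = {z \<in> P. \<forall>y\<in>P. c \<bullet> z \<le> c \<bullet> y}" using vert_min[OF x] by blast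
  obtain u where u: "0 \<le> u" "u \<le> 1" "x = (1 - u) *\<^sub>R v + u *\<^sub>R w" using s unfolding closed_segment_def by blast
  have xm: "\<forall>y\<in>P. c \<bullet> x \<le> c \<bullet> y" using c by blast
  show ?thesis
  proof (cases "u = 1")
    case True then show ?thesis using u by simp
  next
    case False
    have cx: "c \<bullet> x = (1 - u) * (c \<bullet> v) + u * (c \<bullet> w)" using u(3) by (simp add: inner_add_right)
    have cxw: "c \<bullet> x \<le> c \<bullet> w" using xm vw by blast
    have uu: "u * (c \<bullet> x) \<le> u * (c \<bullet> w)" using cxw u(1) by (rule mult_left_mono)
    have "(1 - u) * (c \<bullet> v) \<le> (1 - u) * (c \<bullet> x)"
    proof -
      have "(1 - u) * (c \<bullet> x) = c \<bullet> x - u * (c \<bullet> x)" by (simp add: algebra_simps)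
      then show ?thesis using cx uu by linarith
    qed
    then have "c \<bullet> v \<le> c \<bullet> x" using False u(2) by (simp add: mult_le_cancel_left)
    then have "\<forall>y\<in>P. c \<bullet> v \<le> c \<bullet> y" using xm by force
    then have "v \<in> {x}" using c vw by blast
    then show ?thesis by simp
  qed
qed

end

context LP begin

lemma aff_seg: "v \<noteq> w \<Longrightarrow> aff_dim (closed_segment v w) = 1"
  by (simp add: segment_convex_hull aff_dim_convex_hull aff_dim_2)

lemma edge_fwd: assumes e: "((I, X), (I', X')) \<in> E" and ne: "X ! 0 \<noteq> X' ! 0"
  shows "poly_adjacent P (X ! 0) (X' ! 0)"
proof -
  note nb = nbr[OF e]
  obtain k where k: "k \<in> I" "k \<notin> I'" using nb(4) by blast
  define d where "d = - X ! Suc k"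
  define v where "v = X ! 0"
  define w where "w = X' ! 0"
  obtain l Th where p: "l < m" "l \<notin> I" "l \<in> I'" "I \<inter> I' = I - {k}" "lpos (Suc m) Th"
     "\<forall>j<Suc m. X' ! j = X ! j + Th j *\<^sub>R d" "A l \<bullet> d < 0" "Th 0 \<ge> 0"
    using pivot[OF nb(1) nb(2) k nb(3)] unfolding d_def by blast
  have km: "k < m" using k VI[OF nb(1)] by auto
  have w: "w = v + Th 0 *\<^sub>R d" using p(6) unfolding v_def w_def by simp
  have vw: "v \<noteq> w" using ne unfolding v_def w_def .
  have th: "Th 0 > 0" using p(8) vw w by (cases "Th 0 = 0") auto
  have vP: "v \<in> P" and wP: "w \<in> P" using X0_in_P nb unfolding v_def w_def by auto
  define J where "J = I \<inter> I'"
  have FJ: "{x \<in> P. \<forall>y\<in>P. (\<Sum>j\<in>J. A j) \<bullet> x \<le> (\<Sum>j\<in>J. A j) \<bullet> y} = {x \<in> P. \<forall>j\<in>J. A j \<bullet> x = b j}"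
    using face_tight[OF nb(1)] unfolding J_def by blast
  have seg: "{x \<in> P. \<forall>j\<in>J. A j \<bullet> x = b j} = closed_segment v w"
  proof (intro set_eqI iffI)
    fix x assume x: "x \<in> {x \<in> P. \<forall>j\<in>J. A j \<bullet> x = b j}"
    then have xP: "x \<in> P" and xt: "\<forall>j\<in>J. A j \<bullet> x = b j" by auto
    have "\<forall>j\<in>I - {k}. A j \<bullet> (x - v) = 0"
      using xt basis_col0[OF nb(1)] p(4) unfolding J_def v_def by (auto simp: inner_diff_right)
    then have xv: "x - v = (A k \<bullet> (x - v)) *\<^sub>R d" using dir[OF nb(1) k(1)] unfolding d_def by blast
    define t where "t = A k \<bullet> (x - v)"
    have t0: "t \<ge> 0" using xP km basis_col0[OF nb(1) k(1)] inP unfolding t_def v_def by (auto simp: inner_diff_right)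
    have "A l \<bullet> x \<ge> b l" using xP p(1) inP by auto
    moreover have "A l \<bullet> x = A l \<bullet> v + t * (A l \<bullet> d)" using xv unfolding t_def
      by (metis add.commute diff_add_cancel inner_add_right inner_scaleR_right)
    moreover have "A l \<bullet> w = b l" using basis_col0[OF nb(2) p(3)] unfolding w_def .
    moreover have "A l \<bullet> w = A l \<bullet> v + Th 0 * (A l \<bullet> d)" using w by (simp add: inner_add_right)
    ultimately have "t * (A l \<bullet> d) \<ge> Th 0 * (A l \<bullet> d)" by linarith
    then have tth: "t \<le> Th 0" using p(7) by (simp add: mult_le_cancel_right)
    define u where "u = t / Th 0"
    have u: "0 \<le> u" "u \<le> 1" unfolding u_def using t0 tth th by auto
    have "(1 - u) *\<^sub>R v + u *\<^sub>R w = v + (u * Th 0) *\<^sub>R d" using w by (simp add: algebra_simps)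
    also have "u * Th 0 = t" unfolding u_def using th by simp
    also have "v + t *\<^sub>R d = x" using xv unfolding t_def by (metis add.commute diff_add_cancel)
    finally show "x \<in> closed_segment v w" unfolding closed_segment_def using u by blast
  next
    fix x assume "x \<in> closed_segment v w"
    then obtain u where u: "0 \<le> u" "u \<le> 1" "x = (1 - u) *\<^sub>R v + u *\<^sub>R w" unfolding closed_segment_def by blast
    have xa: "A i \<bullet> x = (1 - u) * (A i \<bullet> v) + u * (A i \<bullet> w)" for i using u(3) by (simp add: inner_add_right)
    have "x \<in> P" unfolding inP
    proof (intro allI impI)
      fix i assume i: "i < m"
      have "(1 - u) * b i \<le> (1 - u) * (A i \<bullet> v)" using vP i inP u(2) by (intro mult_left_mono) auto
      moreover have "u * b i \<le> u * (A i \<bullet> w)" using wP i inP u(1) by (intro mult_left_mono) auto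
      ultimately show "A i \<bullet> x \<ge> b i" unfolding xa by (simp add: algebra_simps)
    qed
    moreover have "\<forall>j\<in>J. A j \<bullet> x = b j"
    proof
      fix j assume "j \<in> J"
      then have "A j \<bullet> v = b j" "A j \<bullet> w = b j" using basis_col0 nb(1,2) unfolding J_def v_def w_def by auto
      then show "A j \<bullet> x = b j" unfolding xa by (simp add: algebra_simps)
    qed
    ultimately show "x \<in> {x \<in> P. \<forall>j\<in>J. A j \<bullet> x = b j}" by blast
  qed
  have "is_face P (closed_segment v w)" unfolding is_face_def
    using FJ seg by (intro conjI exI[of _ "\<Sum>j\<in>J. A j"]) auto
  then show ?thesis unfolding poly_adjacent_def using vert_in nb(1,2) aff_seg[OF vw]
    unfolding v_def w_def by blast
qed

end

context LP begin

lemma edge_bwd: assumes adj: "poly_adjacent P v w"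
  shows "\<exists>I X I' X'. ((I, X), (I', X')) \<in> E \<and> X ! 0 = v \<and> X' ! 0 = w"
proof -
  have vv: "v \<in> poly_vertices P" and wv: "w \<in> poly_vertices P" using adj unfolding poly_adjacent_def by auto
  obtain c where c: "closed_segment v w = {x \<in> P. \<forall>y\<in>P. c \<bullet> x \<le> c \<bullet> y}"
    using adj unfolding poly_adjacent_def is_face_def by blast
  have vw: "v \<noteq> w" using adj unfolding poly_adjacent_def by auto
  obtain cw where cw: "{w} = {x \<in> P. \<forall>y\<in>P. cw \<bullet> x \<le> cw \<bullet> y}" using vert_min[OF wv] by blast
  have vmin: "v \<in> P" "\<forall>y\<in>P. c \<bullet> v \<le> c \<bullet> y" using c ends_in_segment(1)[of v w] by blast+
  have wmin: "w \<in> P" "\<forall>y\<in>P. c \<bullet> w \<le> c \<bullet> y" using c ends_in_segment(2)[of w v] by blast+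
  have cvw: "c \<bullet> w = c \<bullet> v" using vmin wmin by force
  have cwlt: "cw \<bullet> w < cw \<bullet> v"
  proof -
    have "v \<notin> {x \<in> P. \<forall>y\<in>P. cw \<bullet> x \<le> cw \<bullet> y}" using cw vw by blast
    then obtain y where "y \<in> P" "cw \<bullet> y < cw \<bullet> v" using vmin(1) by force
    moreover have "cw \<bullet> w \<le> cw \<bullet> y" using cw calculation(1) by blast
    ultimately show ?thesis by linarith
  qed
  define S where "S = {u \<in> V. snd u ! 0 = v}"
  have fS: "finite S" unfolding S_def using Vfin by simp
  have Sne: "S \<noteq> {}" using vert_of[OF vv] unfolding S_def by force
  define key where "key u j = (if j < Suc m then c \<bullet> (snd u ! j) else cw \<bullet> (snd u ! (j - Suc m)))"
    for u :: "nat set \<times> (real^'n) list" and j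
  obtain u where u: "u \<in> S" "\<forall>y\<in>S. lnn (Suc m + Suc m) (\<lambda>j. key y j - key u j)"
    using finite_lmin[OF fS Sne, of "Suc m + Suc m" key] by blast
  obtain I X where uIX: "u = (I, X)" by (cases u)
  have V1: "(I, X) \<in> V" and X0: "X ! 0 = v" using u uIX unfolding S_def by auto
  obtain lam where lam: "c = (\<Sum>k\<in>I. lam k *\<^sub>R A k)" using spanrep[OF V1] by blast
  obtain nu where nu: "cw = (\<Sum>k\<in>I. nu k *\<^sub>R A k)" using spanrep[OF V1] by blast
  have Im: "I \<subseteq> {..<m}" using VI[OF V1] .
  have piv: "\<exists>I' X' Th. ((I, X), (I', X')) \<in> E \<and> (I', X') \<in> V \<and> lpos (Suc m) Th \<and> Th 0 \<ge> 0 \<and>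
      (\<forall>j<Suc m. X' ! j = X ! j + Th j *\<^sub>R (- X ! Suc k))" if k: "k \<in> I" for k
  proof -
    obtain I' X' where e: "((I, X), (I', X')) \<in> E" "k \<notin> I'" using cnt[OF V1 k] by blast
    note nb = nbr[OF e(1)]
    obtain l Th where "lpos (Suc m) Th" "\<forall>j<Suc m. X' ! j = X ! j + Th j *\<^sub>R (- X ! Suc k)" "Th 0 \<ge> 0"
      using pivot[OF nb(1) nb(2) k e(2) nb(3)] by blast
    then show ?thesis using e nb by blast
  qed
  have keydiff: "key (I', X') j - key u j = (if j < Suc m then Th j * lam k else Th (j - Suc m) * nu k)"
    if k: "k \<in> I" and X': "\<forall>j<Suc m. X' ! j = X ! j + Th j *\<^sub>R (- X ! Suc k)" and j: "j < Suc m + Suc m"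
    for k I' X' Th j
  proof -
    have c1: "c \<bullet> X ! Suc k = - lam k" using cd[OF V1 k lam] by simp
    have c2: "cw \<bullet> X ! Suc k = - nu k" using cd[OF V1 k nu] by simp
    show ?thesis
    proof (cases "j < Suc m")
      case True then show ?thesis unfolding key_def uIX using X' c1
        by (simp only: if_True snd_conv) (simp add: inner_add_right inner_diff_right)
    next
      case False
      then have "j - Suc m < Suc m" using j by simp
      then show ?thesis unfolding key_def uIX using X' c2 False
        by (simp only: if_False snd_conv) (simp add: inner_add_right inner_diff_right)
    qed
  qed
  have lam0: "lam k \<ge> 0" if k: "k \<in> I" for k
  proof (rule ccontr)
    assume neg: "\<not> lam k \<ge> 0"
    obtain I' X' Th where pv: "((I, X), (I', X')) \<in> E" "(I', X') \<in> V" "lpos (Suc m) Th" "Th 0 \<ge> 0"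
      "\<forall>j<Suc m. X' ! j = X ! j + Th j *\<^sub>R (- X ! Suc k)" using piv[OF k] by blast
    have x0: "X' ! 0 = v + Th 0 *\<^sub>R (- X ! Suc k)" using pv(5) X0 by simp
    have "c \<bullet> v \<le> c \<bullet> X' ! 0" using vmin X0_in_P[OF pv(2)] by blast
    then have "0 \<le> Th 0 * lam k" using x0 cd'[OF V1 k lam] by (simp add: inner_add_right inner_diff_right)
    then have "Th 0 = 0" using neg pv(4) by (simp add: zero_le_mult_iff)
    then have "(I', X') \<in> S" using x0 pv(2) unfolding S_def by simp
    then have mn: "lnn (Suc m + Suc m) (\<lambda>j. key (I', X') j - key u j)" using u(2) by blast
    have "lpos (Suc m) (\<lambda>j. (- lam k) * Th j)" using lpos_scale[OF _ pv(3), of "- lam k"] neg by simp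
    then have "lpos (Suc m) (\<lambda>j. - (key (I', X') j - key u j))"
      by (rule lpos_ext) (simp add: keydiff[OF k pv(5)])
    then have "lpos (Suc m + Suc m) (\<lambda>j. - (key (I', X') j - key u j))" by (rule lpos_mono) simp
    then show False using mn lpos_not_neg[of "Suc m + Suc m" "\<lambda>j. - (key (I', X') j - key u j)"] by simp
  qed
  have "\<exists>k\<in>I. lam k = 0 \<and> nu k < 0"
  proof (rule ccontr)
    assume H: "\<not> ?thesis"
    have ge: "A k \<bullet> w - b k \<ge> 0" if "k \<in> I" for k using wmin(1) that Im inP by auto
    have "c \<bullet> w - c \<bullet> v = (\<Sum>k\<in>I. lam k * (A k \<bullet> w - b k))"
      unfolding inner_rep[OF lam] using basis_col0[OF V1] X0
      by (simp add: sum_subtractf[symmetric] algebra_simps)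
    then have "(\<Sum>k\<in>I. lam k * (A k \<bullet> w - b k)) = 0" using cvw by simp
    then have z: "\<forall>k\<in>I. lam k * (A k \<bullet> w - b k) = 0"
      using sum_nonneg_eq_0_iff[OF Vfinite[OF V1], of "\<lambda>k. lam k * (A k \<bullet> w - b k)"] lam0 ge by simp
    have "cw \<bullet> w - cw \<bullet> v = (\<Sum>k\<in>I. nu k * (A k \<bullet> w - b k))"
      unfolding inner_rep[OF nu] using basis_col0[OF V1] X0
      by (simp add: sum_subtractf[symmetric] algebra_simps)
    also have "\<dots> \<ge> 0"
    proof (intro sum_nonneg)
      fix k assume k: "k \<in> I"
      show "nu k * (A k \<bullet> w - b k) \<ge> 0"
      proof (cases "lam k = 0")
        case True then have "nu k \<ge> 0" using H k by force
        then show ?thesis using ge[OF k] by simp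
      next
        case False then have "A k \<bullet> w - b k = 0" using z k by auto
        then show ?thesis by simp
      qed
    qed
    finally show False using cwlt by simp
  qed
  then obtain k where k: "k \<in> I" "lam k = 0" "nu k < 0" by blast
  obtain I' X' Th where pv: "((I, X), (I', X')) \<in> E" "(I', X') \<in> V" "lpos (Suc m) Th" "Th 0 \<ge> 0"
      "\<forall>j<Suc m. X' ! j = X ! j + Th j *\<^sub>R (- X ! Suc k)" using piv[OF k(1)] by blast
  have x0: "X' ! 0 = v + Th 0 *\<^sub>R (- X ! Suc k)" using pv(5) X0 by simp
  have th: "Th 0 \<noteq> 0"
  proof
    assume t0: "Th 0 = 0"
    then have "(I', X') \<in> S" using x0 pv(2) unfolding S_def by simp
    then have mn: "lnn (Suc m + Suc m) (\<lambda>j. key (I', X') j - key u j)" using u(2) by blast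
    have "lpos (Suc m + Suc m) (\<lambda>j. - (key (I', X') j - key u j))"
    proof (rule lpos_shift)
      show "\<forall>j<Suc m. - (key (I', X') j - key u j) = 0" using keydiff[OF k(1) pv(5)] k(2) by simp
      have "lpos (Suc m) (\<lambda>j. (- nu k) * Th j)" using lpos_scale[OF _ pv(3), of "- nu k"] k(3) by simp
      then show "lpos (Suc m) (\<lambda>j. - (key (I', X') (Suc m + j) - key u (Suc m + j)))"
        by (rule lpos_ext) (simp add: keydiff[OF k(1) pv(5)])
    qed
    then show False using mn lpos_not_neg[of "Suc m + Suc m" "\<lambda>j. - (key (I', X') j - key u j)"] by simp
  qed
  have dne: "X ! Suc k \<noteq> 0" using basis_colS[OF V1 k(1), of k] Im k(1) by auto
  have xv: "X' ! 0 \<noteq> v" using x0 th dne by simp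
  have "c \<bullet> X' ! 0 = c \<bullet> v" using x0 cd'[OF V1 k(1) lam] k(2) by (simp add: inner_add_right inner_diff_right)
  then have "X' ! 0 \<in> closed_segment v w" using c vmin X0_in_P[OF pv(2)] by simp
  then have "X' ! 0 = w" using VS[OF vert_in[OF pv(2)] vmin(1) wmin(1)] xv by blast
  then show ?thesis using pv(1) X0 by blast
qed

end

theorem mainTheorem7:
  fixes m :: nat and A :: "nat \<Rightarrow> real^'n" and b :: "nat \<Rightarrow> real"
    and V :: "(nat set \<times> (real^'n) list) set" and E
  assumes poly: "polytope (polyh m A b)"
    and graph: "fin_undirected_graph V E"
    and nonempty: "V \<noteq> {}"
    and vert: "\<And>I X. (I, X) \<in> V \<Longrightarrow>
        I \<subseteq> {..<m} \<and> length X = Suc m \<and>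
        card I = CARD('n) \<and>
        (\<forall>i\<in>I. AX_row A X i = btilde_row m b i) \<and>
        (\<forall>i<m. lex_le (btilde_row m b i) (AX_row A X i)) \<and>
        card {u'. ((I, X), u') \<in> E} = CARD('n) \<and>
        (\<forall>I' X'. ((I, X), (I', X')) \<in> E \<longrightarrow> card (I \<inter> I') = CARD('n) - 1)"
  shows "G_vert (polyh m A b) = graph_image (\<lambda>(I, X). X ! 0) V E"
proof -
  interpret LP m A b V E using graph vert nonempty by unfold_locales auto
  let ?f = "\<lambda>(I, X). X ! 0 :: real^'n"
  have vs: "poly_vertices (polyh m A b) = ?f ` V"
  proof (intro set_eqI iffI)
    fix v assume "v \<in> poly_vertices (polyh m A b)"
    then obtain I X where "(I, X) \<in> V" "X ! 0 = v" using vert_of by blast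
    then show "v \<in> ?f ` V" by force
  next
    fix v assume "v \<in> ?f ` V"
    then obtain I X where "(I, X) \<in> V" "v = X ! 0" by auto
    then show "v \<in> poly_vertices (polyh m A b)" using vert_in by simp
  qed
  have es: "{(v, w). poly_adjacent (polyh m A b) v w} =
      {(?f u, ?f u') | u u'. (u, u') \<in> E \<and> ?f u \<noteq> ?f u'}"
  proof (intro set_eqI iffI)
    fix p assume "p \<in> {(v, w). poly_adjacent (polyh m A b) v w}"
    then obtain v w where p: "p = (v, w)" "poly_adjacent (polyh m A b) v w" by auto
    have "v \<noteq> w" using p(2) unfolding poly_adjacent_def by auto
    moreover obtain I X I' X' where "((I, X), (I', X')) \<in> E" "X ! 0 = v" "X' ! 0 = w"
      using edge_bwd[OF p(2)] by blast
    ultimately show "p \<in> {(?f u, ?f u') | u u'. (u, u') \<in> E \<and> ?f u \<noteq> ?f u'}"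
      using p(1) by force
  next
    fix p assume "p \<in> {(?f u, ?f u') | u u'. (u, u') \<in> E \<and> ?f u \<noteq> ?f u'}"
    then obtain I X I' X' where "p = (X ! 0, X' ! 0)" "((I, X), (I', X')) \<in> E" "X ! 0 \<noteq> X' ! 0" by force
    then show "p \<in> {(v, w). poly_adjacent (polyh m A b) v w}" using edge_fwd by simp
  qed
  show ?thesis unfolding G_vert_def graph_image_def using vs es by simp
qed

end
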